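(* For every tight intersection lattice $L$, we have $\bullet(\mathrm{nti}(L))=2^{\hat 1_L}$, i.e., every subset of $\hat 1_L$ belongs to $\bullet(\mathrm{nti}(L))$.
   Context: A finite family $\mathcal{F}$ of sets is non-trivial if it is non-empty and no $X\in\mathcal{F}$ satisfies $X=\bigcup\mathcal{F}$. For such $\mathcal{F}$ and non-empty $\mathcal{T}\subseteq\mathcal{F}$, let $S_{\mathcal{T}}=\bigcap\mathcal{T}$, and let $S_\emptyset=\bigcup\mathcal{F}$. The intersection lattice of $\mathcal{F}$ is $\mathbb{L}_{\mathcal{F}}=(\{S_{\mathcal{T}}\mid\mathcal{T}\subseteq\mathcal{F}\},\subseteq)$, with greatest element $\hat 1=\bigcup\mathcal{F}$; an intersection lattice is one of this form. For $L=\mathbb{L}_{\mathcal{F}}$ and $x\in\hat 1$, let $\min_L(x)=S_{\{X\in\mathcal{F}\mid x\in X\}}$. $L$ is tight if for every $U\in L$ with $U\neq\hat 1$ there is exactly one $x\in\hat 1$ with $\min_L(x)=U$. Let $\mathrm{nti}(L)=\{U\in L\mid U\neq\hat 1\}$. For sets $A,B$, $A\,\dot\cup\,B=A\cup B$ is defined only when $A\cap B=\emptyset$, and $A\,\dot\setminus\,B=A\setminus B$ is defined only when $B\subseteq A$. For a finite family $\mathcal{G}$ of sets, $\bullet(\mathcal{G})$ is the smallest family of sets containing $\emptyset$ and every member of $\mathcal{G}$ and closed under all well-defined disjoint unions and subset complements. *)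

theory Defs
  imports Main
begin

definition nontrivial_family :: "'a set set \<Rightarrow> bool" where
  "nontrivial_family F \<longleftrightarrow> finite F \<and> F \<noteq> {} \<and> (\<forall>X\<in>F. X \<noteq> \<Union>F)"

definition S_fam :: "'a set set \<Rightarrow> 'a set set \<Rightarrow> 'a set" where
  "S_fam F T = (if T = {} then \<Union>F else \<Inter>T)"

definition int_lattice :: "'a set set \<Rightarrow> 'a set set" where
  "int_lattice F = {S_fam F T | T. T \<subseteq> F}"

definition top_elem :: "'a set set \<Rightarrow> 'a set" where
  "top_elem F = \<Union>F"

definition min_L :: "'a set set \<Rightarrow> 'a \<Rightarrow> 'a set" where
  "min_L F x = S_fam F {X \<in> F. x \<in> X}"

definition tight :: "'a set set \<Rightarrow> bool" where
  "tight F \<longleftrightarrow> (\<forall>U \<in> int_lattice F. U \<noteq> top_elem F \<longrightarrow>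
      (\<exists>!x. x \<in> top_elem F \<and> min_L F x = U))"

definition nti :: "'a set set \<Rightarrow> 'a set set" where
  "nti F = {U \<in> int_lattice F. U \<noteq> top_elem F}"

inductive_set bullet :: "'a set set \<Rightarrow> 'a set set" for G :: "'a set set" where
  empty: "{} \<in> bullet G"
| base: "A \<in> G \<Longrightarrow> A \<in> bullet G"
| disj_union: "A \<in> bullet G \<Longrightarrow> B \<in> bullet G \<Longrightarrow> A \<inter> B = {} \<Longrightarrow> A \<union> B \<in> bullet G"
| subset_diff: "A \<in> bullet G \<Longrightarrow> B \<in> bullet G \<Longrightarrow> B \<subseteq> A \<Longrightarrow> A - B \<in> bullet G"

end

theory Submission
  imports Defs
begin

lemma bullet_finite_singletons:
  assumes "finite A" "\<forall>x\<in>A. {x} \<in> bullet G"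
  shows "A \<in> bullet G"
  using assms(2)
proof (induct rule: finite_induct[OF assms(1)])
  case 1 show ?case by (rule bullet.empty)
next
  case (2 x A)
  note insert = 2
  have "{x} \<union> A \<in> bullet G"
    by (rule bullet.disj_union) (use insert in auto)
  then show ?case by simp
qed

lemma min_L_in_top:
  assumes "x \<in> top_elem F"
  shows "min_L F x = \<Inter>{X \<in> F. x \<in> X}" "{X \<in> F. x \<in> X} \<noteq> {}"
  using assms by (auto simp: min_L_def S_fam_def top_elem_def)

lemma min_L_nti:
  assumes "nontrivial_family F" "x \<in> top_elem F"
  shows "min_L F x \<in> nti F"
proof -
  have ne: "{X \<in> F. x \<in> X} \<noteq> {}" and eq: "min_L F x = \<Inter>{X \<in> F. x \<in> X}"
    using min_L_in_top[OF assms(2)] by auto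
  then obtain X where X: "X \<in> F" "x \<in> X" by auto
  have "min_L F x \<subseteq> X" using eq X by auto
  moreover have "X \<noteq> top_elem F" "X \<subseteq> top_elem F"
    using assms(1) X unfolding nontrivial_family_def top_elem_def by auto
  ultimately have "min_L F x \<noteq> top_elem F" by auto
  moreover have "min_L F x \<in> int_lattice F"
    unfolding int_lattice_def min_L_def by blast
  ultimately show ?thesis unfolding nti_def by auto
qed

theorem fact4p8:
  fixes F :: "'a set set"
  assumes "nontrivial_family F"
    and "tight F"
  shows "\<forall>A. A \<subseteq> top_elem F \<longrightarrow> A \<in> bullet (nti F)"
proof -
  have finF: "finite F" using assms(1) unfolding nontrivial_family_def by auto
  have "int_lattice F = (\<lambda>T. S_fam F T) ` Pow F" unfolding int_lattice_def by auto
  then have "finite (int_lattice F)" using finF by simp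
  then have finN: "finite (nti F)" unfolding nti_def by simp
  have inj: "inj_on (min_L F) (top_elem F)"
  proof (rule inj_onI)
    fix x y assume xy: "x \<in> top_elem F" "y \<in> top_elem F" "min_L F x = min_L F y"
    have "min_L F x \<in> nti F" using min_L_nti[OF assms(1) xy(1)] .
    then have a: "min_L F x \<in> int_lattice F" and b: "min_L F x \<noteq> top_elem F" unfolding nti_def by auto
    have t: "\<forall>U\<in>int_lattice F. U \<noteq> top_elem F \<longrightarrow> (\<exists>!z. z \<in> top_elem F \<and> min_L F z = U)"
      using assms(2) unfolding tight_def .
    have "\<exists>!z. z \<in> top_elem F \<and> min_L F z = min_L F x"
      using t[rule_format, OF a b] .
    then show "x = y" using xy by blast
  qed
  have "min_L F ` top_elem F \<subseteq> nti F" using min_L_nti[OF assms(1)] by auto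
  then have "finite (min_L F ` top_elem F)" using finN finite_subset by blast
  then have finT: "finite (top_elem F)" using inj finite_imageD by blast
  have mono: "min_L F y \<subseteq> min_L F x" if "x \<in> top_elem F" "y \<in> min_L F x" for x y
  proof -
    have "y \<in> top_elem F" using that min_L_in_top[OF that(1)] unfolding top_elem_def by auto
    then show ?thesis using that min_L_in_top[OF that(1)] min_L_in_top[of y F] by auto
  qed
  have self: "x \<in> min_L F x" if "x \<in> top_elem F" for x
    using min_L_in_top[OF that] by auto
  have sub: "min_L F x \<subseteq> top_elem F" if "x \<in> top_elem F" for x
    using min_L_in_top[OF that] unfolding top_elem_def by auto
  have single: "\<forall>x. x \<in> top_elem F \<longrightarrow> card (min_L F x) = n \<longrightarrow> {x} \<in> bullet (nti F)" for n
  proof (induction n rule: less_induct)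
    case (less n)
    show ?case
    proof (intro allI impI)
      fix x assume x: "x \<in> top_elem F" and c: "card (min_L F x) = n"
      have finM: "finite (min_L F x)" using sub[OF x] finT finite_subset by blast
      have "\<forall>y\<in>min_L F x - {x}. {y} \<in> bullet (nti F)"
      proof
        fix y assume y: "y \<in> min_L F x - {x}"
        have yT: "y \<in> top_elem F" using y sub[OF x] by auto
        have "min_L F y \<subseteq> min_L F x" using mono[OF x] y by auto
        moreover have "min_L F y \<noteq> min_L F x" using inj x yT y unfolding inj_on_def by blast
        ultimately have "min_L F y \<subset> min_L F x" by auto
        then have "card (min_L F y) < n" using c finM psubset_card_mono by blast
        then show "{y} \<in> bullet (nti F)" using less yT by blast
      qed
      then have r: "min_L F x - {x} \<in> bullet (nti F)"
        using finM by (intro bullet_finite_singletons) auto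
      have m: "min_L F x \<in> bullet (nti F)"
        using min_L_nti[OF assms(1) x] by (rule bullet.base)
      have "min_L F x - (min_L F x - {x}) \<in> bullet (nti F)"
        using m r by (rule bullet.subset_diff) auto
      moreover have "min_L F x - (min_L F x - {x}) = {x}" using self[OF x] by auto
      ultimately show "{x} \<in> bullet (nti F)" by simp
    qed
  qed
  show ?thesis
  proof (intro allI impI)
    fix A assume A: "A \<subseteq> top_elem F"
    then have "finite A" using finT finite_subset by blast
    moreover have "\<forall>x\<in>A. {x} \<in> bullet (nti F)" using single A by blast
    ultimately show "A \<in> bullet (nti F)" by (rule bullet_finite_singletons)
  qed
qed

end
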